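(* Let $s\ge2$ and constants $0<a<b$. Let $r(t)$, $t\ge0$, be a differentiable function with $$\dot r\ge a r^{s-1}-br^{2s-1},$$ with $r_0>0$ and $r_t\le1$ for all $t$. Let $k=a/b$ and $T=\inf\{t\ge0:r_t\ge k^2\}$. Then $$T\le\frac1{bk^2}\Big(\frac{2k}{r_0^{s-1}}+\log\frac1{1-k}\Big).$$ *)

theory Defs
  imports "HOL-Analysis.Analysis"
begin

end

theory Submission
  imports Defs
begin

lemma alg:
  fixes P c k r b :: real
  assumes "b > 0" "0 < r" "r < k" "P > 0" "P \<le> 1" "P * c \<ge> 1" "k < 1"
  shows "P * (b * k - b * P * r) * ((c - 1) / (b * k) + 1 / (b * (k - r))) \<ge> 1"
proof -
  have k0: "k > 0" using assms by simp
  have e: "P * (b * k - b * P * r) * ((c - 1) / (b * k) + 1 / (b * (k - r)))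
      = (P * c) * ((k - P * r) / k) + (P * r) * ((k - P * r) / (k - r)) / k"
    using assms k0 by (simp add: field_simps)
  have Pr: "P * r \<le> r" using assms by (simp add: mult_left_le_one_le)
  have "(k - P * r) / k \<ge> 0" proof (rule divide_nonneg_pos)
    show "0 \<le> k - P * r" using Pr assms by linarith
  qed (rule k0)
  then have 1: "(P * c) * ((k - P * r) / k) \<ge> (k - P * r) / k"
    using assms by (metis mult_le_cancel_right1 mult.commute nle_le mult_right_mono mult_1)
  have ge1: "(k - P * r) / (k - r) \<ge> 1" using assms 
    using Pr by (simp add: le_divide_eq)
  then have 2: "(P * r) * ((k - P * r) / (k - r)) \<ge> P * r"
    using mult_left_mono[OF ge1, of "P*r"] assms by simp
  have "(k - P * r) / k + P * r / k = 1" using k0 by (simp add: field_simps)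
  moreover have "(P * r) * ((k - P * r) / (k - r)) / k \<ge> P * r / k"
    using divide_right_mono[OF 2, of k] k0 by simp
  ultimately show ?thesis unfolding e using 1 by linarith
qed

theorem lemmaH2:
  fixes s a b :: real and r r' :: "real \<Rightarrow> real"
  assumes s2: "s \<ge> 2"
    and ab: "0 < a" "a < b"
    and deriv: "\<And>t. t \<ge> 0 \<Longrightarrow> (r has_real_derivative r' t) (at t within {0..})"
    and ineq: "\<And>t. t \<ge> 0 \<Longrightarrow> r' t \<ge> a * r t powr (s - 1) - b * r t powr (2 * s - 1)"
    and r0: "r 0 > 0"
    and le1: "\<And>t. t \<ge> 0 \<Longrightarrow> r t \<le> 1"
  shows "(\<exists>t\<ge>0. r t \<ge> (a / b)^2) \<and>
         Inf {t. t \<ge> 0 \<and> r t \<ge> (a / b)^2}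
           \<le> 1 / (b * (a / b)^2) * (2 * (a / b) / r 0 powr (s - 1) + ln (1 / (1 - a / b)))"
proof -
  define k where "k = a / b"
  define c where "c = 1 / r 0 powr (s - 1)"
  define L where "L = ln (1 / (1 - k))"
  define \<tau> where "\<tau> = 1 / (b * k^2) * (2 * k * c + L)"
  have b0: "b > 0" using ab by simp
  have k0: "0 < k" and k1: "k < 1" using ab by (auto simp: k_def)
  have akb: "a = b * k" using b0 by (simp add: k_def)
  have kk: "k^2 < k" using k0 k1 by (simp add: power2_eq_square)
  have r01: "r 0 \<le> 1" using le1 by simp
  have P0: "r 0 powr (s - 1) > 0" using r0 by simp
  have P01: "r 0 powr (s - 1) \<le> 1" using r01 r0 s2 by (intro powr_le1) auto
  have c1: "c \<ge> 1" using P0 P01 by (simp add: c_def)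
  have L0: "L > 0" using k0 k1 by (simp add: L_def)
  have tau0: "\<tau> \<ge> 0" using b0 k0 c1 L0 by (simp add: \<tau>_def)
  have cont: "continuous_on {0..} r"
    by (rule DERIV_continuous_on) (use deriv in auto)
  have dbound: "r' t \<ge> r t powr (s - 1) * (b * k - b * r t powr (s - 1) * r t)"
    if "t \<ge> 0" "r t > 0" for t
  proof -
    have "r t powr (2 * s - 1) = r t powr (s - 1) * r t powr (s - 1) * r t powr 1"
    proof -
      have "2 * s - 1 = (s - 1) + (s - 1) + 1" by simp
      then show ?thesis by (metis powr_add)
    qed
    also have "\<dots> = r t powr (s - 1) * r t powr (s - 1) * r t" using that by simp
    finally show ?thesis using ineq[OF that(1)] akb by (simp add: algebra_simps)
  qed
  have Pbounds: "r t powr (s - 1) > 0 \<and> r t powr (s - 1) \<le> 1"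
    if "t \<ge> 0" "r t > 0" for t
    using that le1[OF that(1)] s2 by (auto intro!: powr_le1)
  have key: "\<exists>t\<in>{0..\<tau>}. r t \<ge> k^2"
  proof (rule ccontr)
    assume H: "\<not> ?thesis"
    hence H': "\<And>t. t \<in> {0..\<tau>} \<Longrightarrow> r t < k^2" by force
    have rpos: "r' t > 0" if "t \<in> {0..\<tau>}" "r t > 0" for t
    proof -
      have "r t < k" using H'[OF that(1)] kk by linarith
      hence "b * r t powr (s - 1) * r t < b * k"
        using Pbounds[of t] that b0 
        by (smt (verit, best) atLeastAtMost_iff mult_left_le_one_le mult_strict_left_mono mult.assoc)
      then show ?thesis using dbound[of t] Pbounds[of t] that
        by (smt (verit, best) atLeastAtMost_iff mult_pos_pos)
    qed
    have mono: "r x \<ge> r 0" if x: "x \<in> {0..\<tau>}" for x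
    proof (rule ccontr)
      assume "\<not> r x \<ge> r 0"
      hence rx: "r x < r 0" by simp
      define S where "S = {z \<in> {0..x}. r 0 \<le> r z}"
      define y where "y = Sup S"
      have cx: "continuous_on {0..x} r" using cont by (rule continuous_on_subset) auto
      have "closed S" unfolding S_def
        by (rule continuous_on_closed_Collect_le[OF continuous_on_const cx]) simp
      moreover have "0 \<in> S" using x by (auto simp: S_def)
      moreover have "bdd_above S" by (rule bdd_aboveI[of _ x]) (auto simp: S_def)
      ultimately have yS: "y \<in> S" unfolding y_def by (intro closed_contains_Sup) auto
      have zle: "z \<le> y" if "z \<in> S" for z
        unfolding y_def by (rule cSup_upper) (use that \<open>bdd_above S\<close> in auto)
      have yx: "y < x" using yS rx by (auto simp: S_def order.order_iff_strict)
      have y0: "y \<ge> 0" and ry: "r y \<ge> r 0" using yS by (auto simp: S_def)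
      have ytau: "y \<in> {0..\<tau>}" using y0 yx x by auto
      have d: "r' y > 0" using rpos[OF ytau] ry r0 by simp
      have "((\<lambda>z. (r z - r y) / (z - y)) \<longlongrightarrow> r' y) (at y within {0..})"
        using deriv[OF y0] by (simp add: has_field_derivative_iff)
      hence "((\<lambda>z. (r z - r y) / (z - y)) \<longlongrightarrow> r' y) (at_right y)"
        by (rule tendsto_mono[rotated]) (rule at_le, use y0 in auto)
      hence "eventually (\<lambda>z. (r z - r y) / (z - y) > 0) (at_right y)"
        using d by (rule order_tendstoD)
      then obtain e where e: "e > y" "\<And>z. z > y \<Longrightarrow> z < e \<Longrightarrow> (r z - r y) / (z - y) > 0"
        unfolding eventually_at_right_field by blast
      define z where "z = (y + min e x) / 2"
      have z1: "y < z" "z < e" "z < x" using e yx by (auto simp: z_def)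
      have "(r z - r y) / (z - y) > 0" using e z1 by auto
      hence "r z > r y" using z1 by (simp add: zero_less_divide_iff)
      hence "z \<in> S" using z1 ry y0 by (auto simp: S_def)
      with zle z1 show False by fastforce
    qed
    have klt: "k - r t > 0" if "t \<in> {0..\<tau>}" for t
      using H'[OF that] kk by linarith
    define G where "G u = u * (c - 1) / (b * k) - ln (k - u) / b" for u
    define \<phi> where "\<phi> t = G (r t) - t" for t
    have "\<phi> 0 \<le> \<phi> \<tau>"
    proof (rule DERIV_nonneg_imp_increasing_open[OF tau0])
      fix x assume x: "0 < x" "x < \<tau>"
      have xI: "x \<in> {0..\<tau>}" using x by auto
      have "at x within {0..} = at x"
        by (rule at_within_interior) (use x in simp)
      hence dx: "(r has_real_derivative r' x) (at x)" using deriv[of x] x by simp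
      have kx: "k - r x > 0" using klt[OF xI] .
      have rx0: "r x > 0" using mono[OF xI] r0 by linarith
      have "(\<phi> has_real_derivative (r' x * (c - 1) / (b * k) - (- r' x / (k - r x)) / b - 1)) (at x)"
        unfolding \<phi>_def[abs_def] G_def using kx b0 k0
        by (auto intro!: derivative_eq_intros dx simp: field_simps)
      moreover have "r' x * (c - 1) / (b * k) - (- r' x / (k - r x)) / b - 1 \<ge> 0"
      proof -
        define P where "P = r x powr (s - 1)"
        have PP: "P > 0" "P \<le> 1" using Pbounds[of x] x rx0 by (auto simp: P_def)
        have "r 0 powr (s - 1) \<le> P" unfolding P_def
          using mono[OF xI] r0 s2 by (intro powr_mono2) auto
        hence Pc: "P * c \<ge> 1" using P0 by (simp add: c_def)
        have "r x < k" using H'[OF xI] kk by linarith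
        have A: "P * (b * k - b * P * r x) * ((c - 1) / (b * k) + 1 / (b * (k - r x))) \<ge> 1"
          by (rule alg) (use b0 rx0 \<open>r x < k\<close> PP Pc k1 in auto)
        have D: "(c - 1) / (b * k) + 1 / (b * (k - r x)) \<ge> 0"
          using c1 b0 k0 kx by simp
        have "r' x \<ge> P * (b * k - b * P * r x)" using dbound[of x] x rx0 by (simp add: P_def)
        hence "r' x * ((c - 1) / (b * k) + 1 / (b * (k - r x))) \<ge> 1"
          using A D by (meson mult_right_mono order_trans)
        moreover have "r' x * (c - 1) / (b * k) - (- r' x / (k - r x)) / b - 1
          = r' x * ((c - 1) / (b * k) + 1 / (b * (k - r x))) - 1"
          by (simp add: field_simps)
        ultimately show ?thesis by simp
      qed
      ultimately show "\<exists>y. (\<phi> has_real_derivative y) (at x) \<and> y \<ge> 0" by blast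
    next
      have c0: "continuous_on {0..\<tau>} r" using cont by (rule continuous_on_subset) auto
      show "continuous_on {0..\<tau>} \<phi>"
        unfolding \<phi>_def[abs_def] G_def
        by (intro continuous_intros c0; use klt b0 k0 in force)
    qed
    hence le: "\<tau> \<le> G (r \<tau>) - G (r 0)" by (simp add: \<phi>_def)
    have tI: "\<tau> \<in> {0..\<tau>}" using tau0 by simp
    have rt1: "r \<tau> - r 0 \<le> k^2" using H'[OF tI] r0 by linarith
    have rt2: "r \<tau> - r 0 \<ge> 0" using mono[OF tI] by simp
    have g1: "(r \<tau> - r 0) * (c - 1) / (b * k) \<le> k^2 * (c - 1) / (b * k)"
      using rt1 c1 b0 k0 by (intro divide_right_mono mult_right_mono) auto
    have g1': "k^2 * (c - 1) / (b * k) < k * c / b"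
      using b0 k0 by (simp add: power2_eq_square field_simps)
    have kr0: "k - r 0 > 0" using klt[of 0] tau0 by simp
    have l1: "ln (k - r 0) \<le> ln k" using kr0 r0 by simp
    have l2: "ln (k - k^2) \<le> ln (k - r \<tau>)" using klt[OF tI] H'[OF tI] kk by (intro ln_mono) auto
    have l3: "ln k - ln (k - k^2) = L"
    proof -
      have "k - k^2 = k * (1 - k)" by (simp add: power2_eq_square algebra_simps)
      then have "ln (k - k^2) = ln k + ln (1 - k)" using k0 k1 by (simp add: ln_mult)
      then show ?thesis using k1 by (simp add: L_def ln_div)
    qed
    have "G (r \<tau>) - G (r 0) = (r \<tau> - r 0) * (c - 1) / (b * k) + (ln (k - r 0) - ln (k - r \<tau>)) / b"
      unfolding G_def using b0 k0 by (simp add: field_simps)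
    also have "(ln (k - r 0) - ln (k - r \<tau>)) / b \<le> L / b"
      using l1 l2 l3 b0 by (intro divide_right_mono) auto
    hence "(r \<tau> - r 0) * (c - 1) / (b * k) + (ln (k - r 0) - ln (k - r \<tau>)) / b < k * c / b + L / b"
      using g1 g1' by linarith
    finally have lt: "\<tau> < (k * c + L) / b" using le by (simp add: add_divide_distrib)
    have "k * c * k^2 \<le> 2 * k * c" proof -
      have "k * c * k^2 \<le> k * c * 1" using k0 k1 c1 kk by (intro mult_left_mono) auto
      then show ?thesis using k0 c1 by simp
    qed
    moreover have "L * k^2 \<le> L" using L0 kk k1 k0
      by (smt (verit, best) mult_left_le power_le_one)
    ultimately have "(k * c + L) * k^2 \<le> 2 * k * c + L" by (simp add: algebra_simps)
    hence "(k * c + L) \<le> (2 * k * c + L) / k^2" using k0 by (simp add: le_divide_eq)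
    hence "(k * c + L) / b \<le> \<tau>" proof -
      have "\<tau> = ((2 * k * c + L) / k^2) / b" by (simp add: \<tau>_def field_simps)
      then show ?thesis using b0 \<open>(k * c + L) \<le> (2 * k * c + L) / k^2\<close>
        by (metis divide_right_mono less_imp_le)
    qed
    with lt show False by simp
  qed
  then obtain t where t: "t \<in> {0..\<tau>}" "r t \<ge> k^2" by blast
  have "Inf {t. t \<ge> 0 \<and> r t \<ge> k^2} \<le> t"
    by (rule cInf_lower) (use t in \<open>auto intro: bdd_belowI[of _ 0]\<close>)
  have teq: "\<tau> = 1 / (b * (a / b)^2) * (2 * (a / b) / r 0 powr (s - 1) + ln (1 / (1 - a / b)))"
    by (simp add: \<tau>_def k_def c_def L_def)
  show ?thesis using t \<open>Inf {t. t \<ge> 0 \<and> r t \<ge> k^2} \<le> t\<close> unfolding teq[symmetric] k_def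
    by auto
qed

end
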